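(* Let $L$ be a finite-dimensional Lie algebra over a field of characteristic zero. Then $E(L)$ is a characteristic ideal of $L$ (an ideal invariant under every derivation of $L$), and consequently $E(L)\subseteq N(L)$.
   Context: For $x\in L$, $\operatorname{ad}x:L\to L$ is $\operatorname{ad}x(y)=[y,x]$, and $E_L(x)=\{y\in L\mid (\operatorname{ad}x)^n(y)=0 \text{ for some } n\in\mathbb{N}\}$. An element $y$ is an Engel element of $L$ if $y\in E_L(x)$ for all $x\in L$; $E(L)$ denotes the set of all Engel elements of $L$. $N(L)$ denotes the nilradical of $L$, i.e. its largest nilpotent ideal. *)

theory Defs
  imports Complex_Main
begin

text \<open>A Lie algebra over the field 'k: the carrier is the whole type 'L, with scalar
multiplication sc and bracket br.\<close>

definition lie_algebra :: "('k::field \<Rightarrow> 'L::ab_group_add \<Rightarrow> 'L) \<Rightarrow> ('L \<Rightarrow> 'L \<Rightarrow> 'L) \<Rightarrow> bool" where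
  "lie_algebra sc br \<longleftrightarrow>
     vector_space sc \<and>
     (\<forall>x. Vector_Spaces.linear sc sc (br x)) \<and>
     (\<forall>y. Vector_Spaces.linear sc sc (\<lambda>x. br x y)) \<and>
     (\<forall>x. br x x = 0) \<and>
     (\<forall>x y z. br x (br y z) + br y (br z x) + br z (br x y) = 0)"

definition finite_dimensional :: "('k::field \<Rightarrow> 'L::ab_group_add \<Rightarrow> 'L) \<Rightarrow> bool" where
  "finite_dimensional sc \<longleftrightarrow> (\<exists>B. finite B \<and> module.span sc B = UNIV)"

definition ad :: "('L \<Rightarrow> 'L \<Rightarrow> 'L) \<Rightarrow> 'L \<Rightarrow> 'L \<Rightarrow> 'L" where
  "ad br x = (\<lambda>y. br y x)"

definition engel_set :: "('L \<Rightarrow> 'L \<Rightarrow> 'L) \<Rightarrow> 'L \<Rightarrow> 'L::zero set" where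
  "engel_set br x = {y. \<exists>n. (ad br x ^^ n) y = 0}"

definition engel_elements :: "('L \<Rightarrow> 'L \<Rightarrow> 'L) \<Rightarrow> 'L::zero set" where
  "engel_elements br = {y. \<forall>x. y \<in> engel_set br x}"

definition lie_ideal :: "('k::field \<Rightarrow> 'L::ab_group_add \<Rightarrow> 'L) \<Rightarrow> ('L \<Rightarrow> 'L \<Rightarrow> 'L) \<Rightarrow> 'L set \<Rightarrow> bool" where
  "lie_ideal sc br I \<longleftrightarrow> module.subspace sc I \<and> (\<forall>x\<in>I. \<forall>y. br x y \<in> I)"

definition derivation :: "('k::field \<Rightarrow> 'L::ab_group_add \<Rightarrow> 'L) \<Rightarrow> ('L \<Rightarrow> 'L \<Rightarrow> 'L) \<Rightarrow> ('L \<Rightarrow> 'L) \<Rightarrow> bool" where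
  "derivation sc br D \<longleftrightarrow> Vector_Spaces.linear sc sc D \<and>
     (\<forall>x y. D (br x y) = br (D x) y + br x (D y))"

definition characteristic_ideal :: "('k::field \<Rightarrow> 'L::ab_group_add \<Rightarrow> 'L) \<Rightarrow> ('L \<Rightarrow> 'L \<Rightarrow> 'L) \<Rightarrow> 'L set \<Rightarrow> bool" where
  "characteristic_ideal sc br I \<longleftrightarrow> lie_ideal sc br I \<and>
     (\<forall>D. derivation sc br D \<longrightarrow> (\<forall>x\<in>I. D x \<in> I))"

fun lower_central :: "('k::field \<Rightarrow> 'L::ab_group_add \<Rightarrow> 'L) \<Rightarrow> ('L \<Rightarrow> 'L \<Rightarrow> 'L) \<Rightarrow> 'L set \<Rightarrow> nat \<Rightarrow> 'L set" where
  "lower_central sc br I 0 = I"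
| "lower_central sc br I (Suc k) =
     module.span sc {br a b | a b. a \<in> lower_central sc br I k \<and> b \<in> I}"

definition nilpotent_set :: "('k::field \<Rightarrow> 'L::ab_group_add \<Rightarrow> 'L) \<Rightarrow> ('L \<Rightarrow> 'L \<Rightarrow> 'L) \<Rightarrow> 'L set \<Rightarrow> bool" where
  "nilpotent_set sc br I \<longleftrightarrow> (\<exists>k. lower_central sc br I k = {0})"

text \<open>N(L): the nilradical, the sum (span of the union) of all nilpotent ideals;
in finite dimension this is the largest nilpotent ideal.\<close>
definition nilradical :: "('k::field \<Rightarrow> 'L::ab_group_add \<Rightarrow> 'L) \<Rightarrow> ('L \<Rightarrow> 'L \<Rightarrow> 'L) \<Rightarrow> 'L set" where
  "nilradical sc br = module.span sc (\<Union>{I. lie_ideal sc br I \<and> nilpotent_set sc br I})"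

end

theory Submission
  imports Defs "HOL-Computational_Algebra.Polynomial"
begin

fun cf :: "('L::ab_group_add \<Rightarrow> 'L) \<Rightarrow> ('L \<Rightarrow> 'L) \<Rightarrow> 'L \<Rightarrow> nat \<Rightarrow> nat \<Rightarrow> 'L" where
  "cf A B y 0 k = (if k = 0 then y else 0)"
| "cf A B y (Suc n) k = A (cf A B y n k) + (case k of 0 \<Rightarrow> 0 | Suc j \<Rightarrow> B (cf A B y n j))"

lemma cf_gt: "A 0 = 0 \<Longrightarrow> B 0 = 0 \<Longrightarrow> n < k \<Longrightarrow> cf A B y n k = 0"
proof (induction n arbitrary: k)
  case 0 then show ?case by simp
next
  case (Suc n)
  then show ?case by (cases k) auto
qed

lemma cf_0: "cf A B y n 0 = (A^^n) y"
  by (induction n) auto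

locale lie_fd = finite_dimensional_vector_space sc Basis
  for sc :: "'k::field_char_0 \<Rightarrow> 'L::ab_group_add \<Rightarrow> 'L" and Basis :: "'L set" +
  fixes br :: "'L \<Rightarrow> 'L \<Rightarrow> 'L"
  assumes lie: "lie_algebra sc br"
begin

lemma linR: "Vector_Spaces.linear sc sc (br x)" using lie unfolding lie_algebra_def by auto
lemma linL: "Vector_Spaces.linear sc sc (\<lambda>x. br x y)" using lie unfolding lie_algebra_def by auto
lemma alt[simp]: "br x x = 0" using lie unfolding lie_algebra_def by auto
lemma jacobi: "br x (br y z) + br y (br z x) + br z (br x y) = 0" using lie unfolding lie_algebra_def by auto

lemma lin_mh: "Vector_Spaces.linear sc sc f \<Longrightarrow> module_hom sc sc f"
  by (simp add: module_hom_iff_linear)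
lemma lin_add: "Vector_Spaces.linear sc sc f \<Longrightarrow> f (x + y) = f x + f y"
  by (simp add: Vector_Spaces.linear_iff)
lemma lin_sc: "Vector_Spaces.linear sc sc f \<Longrightarrow> f (sc c x) = sc c (f x)"
  by (simp add: Vector_Spaces.linear_iff)
lemma lin_zero: "Vector_Spaces.linear sc sc f \<Longrightarrow> f 0 = 0"
  by (rule module_hom.zero[OF lin_mh])
lemma lin_diff: "Vector_Spaces.linear sc sc f \<Longrightarrow> f (x - y) = f x - f y"
  by (rule module_hom.diff[OF lin_mh])
lemma lin_neg: "Vector_Spaces.linear sc sc f \<Longrightarrow> f (- x) = - f x"
  by (rule module_hom.neg[OF lin_mh])

lemma addR: "br x (y + z) = br x y + br x z" by (rule lin_add[OF linR])
lemma addL: "br (x + y) z = br x z + br y z" using lin_add[OF linL[of z]] by simp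
lemma scR: "br x (sc c y) = sc c (br x y)" by (rule lin_sc[OF linR])
lemma scL: "br (sc c x) y = sc c (br x y)" using lin_sc[OF linL[of y]] by simp
lemma zeroR[simp]: "br x 0 = 0" by (rule lin_zero[OF linR])
lemma zeroL[simp]: "br 0 x = 0" using lin_zero[OF linL[of x]] by simp
lemma diffR: "br x (y - z) = br x y - br x z" by (rule lin_diff[OF linR])
lemma diffL: "br (x - y) z = br x z - br y z" using lin_diff[OF linL[of z]] by simp
lemma negR: "br x (- y) = - br x y" by (rule lin_neg[OF linR])
lemma negL: "br (- x) y = - br x y" using lin_neg[OF linL[of y]] by simp
lemma anti: "br y x = - br x y"
proof -
  have "br (x+y) (x+y) = br x x + br y x + (br x y + br y y)" by (simp only: addL addR)
  then have "br y x + br x y = 0" by simp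
  then show ?thesis by (simp add: add_eq_0_iff)
qed
lemma der_id: "br (br v c) h = br (br v h) c + br v (br c h)"
proof -
  have 1: "br (br v c) h = - br h (br v c)" by (rule anti)
  have 2: "br (br v h) c = br c (br h v)"
    using anti[of c "br v h"] anti[of h v] negR by simp
  have 3: "br h (br v c) = - (br v (br c h) + br c (br h v))"
    using jacobi[of v c h] by (simp add: add_eq_0_iff add.commute)
  show ?thesis unfolding 1 2 3 by (simp add: add.commute)
qed

lemma derivation_ad: "derivation sc br (\<lambda>v. br v z)"
  unfolding derivation_def by (blast intro: linL der_id)

lemma funpow_lin: "Vector_Spaces.linear sc sc f \<Longrightarrow> Vector_Spaces.linear sc sc (f^^n)"
proof (induction n)
  case 0
  then show ?case using linear_id by (simp add: id_def)
next
  case (Suc n)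
  then show ?case using Vector_Spaces.linear_compose[of sc sc "f^^n" sc f] by (simp add: o_def)
qed

lemma sub_kernel: "Vector_Spaces.linear sc sc g \<Longrightarrow> subspace {v. g v = 0}"
  unfolding subspace_def by (simp add: lin_add lin_sc lin_zero)

lemma span_sub: "subspace S \<Longrightarrow> span S = S" by simp

lemma chain_dim:
  assumes "\<And>j. subspace (K j)" "\<And>j. j < n \<Longrightarrow> K j \<subset> K (Suc j)"
  shows "dim (K n) \<ge> n"
  using assms(2)
proof (induction n)
  case 0 then show ?case by simp
next
  case (Suc n)
  have "dim (K n) < dim (K (Suc n))"
    using dim_psubset[of "K n" "K (Suc n)"] Suc.prems assms(1) by (simp add: span_sub)
  with Suc show ?case by simp
qed

lemma pow_bound:
  assumes lf: "Vector_Spaces.linear sc sc f" and v: "(f^^n) v = 0"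
  shows "(f^^dimension) v = 0"
proof -
  define K where "K j = {v. (f^^j) v = 0}" for j
  have subK: "subspace (K j)" for j unfolding K_def by (rule sub_kernel[OF funpow_lin[OF lf]])
  have mono: "K j \<subseteq> K (Suc j)" for j
    unfolding K_def using lin_zero[OF lf] by auto
  have mono2: "K j \<subseteq> K (j + i)" for i j
    by (induction i) (use mono in auto)
  have stab: "K j = K (Suc j) \<Longrightarrow> K (Suc j) = K (Suc (Suc j))" for j
  proof
    assume eq: "K j = K (Suc j)"
    show "K (Suc (Suc j)) \<subseteq> K (Suc j)"
    proof
      fix v assume "v \<in> K (Suc (Suc j))"
      then have "f v \<in> K (Suc j)" unfolding K_def by (simp add: funpow_Suc_right del: funpow.simps)
      then have "f v \<in> K j" using eq by simp
      then show "v \<in> K (Suc j)" unfolding K_def by (simp add: funpow_Suc_right del: funpow.simps)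
    qed
  qed (rule mono)
  have stab2: "K j = K (Suc j) \<Longrightarrow> K (j + i) = K j" for i j
  proof (induction i)
    case 0 then show ?case by simp
  next
    case (Suc i)
    have "K (j + i) = K (Suc (j + i))"
    proof (cases i)
      case 0 then show ?thesis using Suc by simp
    next
      case (Suc i')
      have "K (j + i') = K (Suc (j + i'))" using \<open>K j = K (Suc j)\<close>
      proof (induction i')
        case 0 then show ?case by simp
      next
        case (Suc i'') then show ?case using stab by simp
      qed
      then show ?thesis using stab Suc by simp
    qed
    then show ?case using Suc by simp
  qed
  have "\<exists>j\<le>dimension. K j = K (Suc j)"
  proof (rule ccontr)
    assume "\<not> ?thesis"
    then have "\<And>j. j < Suc dimension \<Longrightarrow> K j \<subset> K (Suc j)" using mono by auto
    then have "dim (K (Suc dimension)) \<ge> Suc dimension" using chain_dim[of K] subK by blast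
    moreover have "dim (K (Suc dimension)) \<le> dimension" by (rule dim_subset_UNIV)
    ultimately show False by simp
  qed
  then obtain j where j: "j \<le> dimension" "K j = K (Suc j)" by blast
  have "v \<in> K n" using v unfolding K_def by simp
  also have "K n \<subseteq> K (j + n)" using mono2[of n j] by (simp add: add.commute)
  also have "K (j + n) = K j" using stab2 j by blast
  also have "K j \<subseteq> K dimension" using mono2[of j "dimension - j"] j by simp
  finally show ?thesis unfolding K_def by simp
qed

lemma lin_sum: "Vector_Spaces.linear sc sc f \<Longrightarrow> f (sum g S) = (\<Sum>x\<in>S. f (g x))"
  using module_hom.sum[of sc sc f] module_hom_iff_linear by metis

lemma poly_vec:
  assumes h: "\<And>t. (\<Sum>k\<le>n. sc (t^k) (c k)) = 0" and i: "i \<le> n"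
  shows "c i = 0"
proof -
  have rep0: "representation Basis (c i) b = 0" for b
  proof (cases "b \<in> Basis")
    case False then show ?thesis using representation_ne_zero by blast
  next
    case True
    define r where "r v = representation Basis v b" for v
    have lr: "Vector_Spaces.linear sc (*) r"
      using linear_representation[OF independent_Basis span_Basis] unfolding r_def by simp
    have rsum: "r (sum g S) = (\<Sum>x\<in>S. r (g x))" for g S
      using module_hom.sum[of sc "(*)" r] module_hom_iff_linear lr by metis
    have rsc: "r (sc a v) = a * r v" for a v using lr by (simp add: Vector_Spaces.linear_iff)
    have r0: "r 0 = 0" using rsum[of _ "{}"] by simp
    define p where "p = (\<Sum>k\<le>n. monom (r (c k)) k)"
    have "poly p t = 0" for t
    proof -
      have "poly p t = (\<Sum>k\<le>n. r (c k) * t^k)" unfolding p_def by (simp add: poly_sum poly_monom)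
      also have "\<dots> = r (\<Sum>k\<le>n. sc (t^k) (c k))" by (simp add: rsum rsc mult.commute)
      also have "\<dots> = 0" using h r0 by simp
      finally show ?thesis .
    qed
    then have "p = 0" using poly_all_0_iff_0 by blast
    then have "coeff p i = 0" by simp
    moreover have "coeff p i = r (c i)" unfolding p_def using i by (simp add: coeff_sum)
    ultimately show ?thesis unfolding r_def by simp
  qed
  have "c i = (\<Sum>b\<in>Basis. sc (representation Basis (c i) b) b)"
    using sum_representation_eq[of Basis "c i" Basis] independent_Basis span_Basis finite_Basis by simp
  also have "\<dots> = 0" using rep0 by simp
  finally show ?thesis .
qed

lemma expand:
  assumes lA: "Vector_Spaces.linear sc sc A" and lB: "Vector_Spaces.linear sc sc B"
  shows "((\<lambda>v. A v + sc t (B v))^^n) y = (\<Sum>k\<le>n. sc (t^k) (cf A B y n k))"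
proof (induction n)
  case 0 then show ?case by simp
next
  case (Suc n)
  have A0: "A 0 = 0" and B0: "B 0 = 0" using lin_zero lA lB by auto
  have "((\<lambda>v. A v + sc t (B v))^^Suc n) y = A (\<Sum>k\<le>n. sc (t^k) (cf A B y n k)) + sc t (B (\<Sum>k\<le>n. sc (t^k) (cf A B y n k)))"
    using Suc by simp
  also have "\<dots> = (\<Sum>k\<le>n. sc (t^k) (A (cf A B y n k))) + (\<Sum>k\<le>n. sc (t^Suc k) (B (cf A B y n k)))"
    by (simp add: lin_sum[OF lA] lin_sum[OF lB] lin_sc[OF lA] lin_sc[OF lB] scale_sum_right mult.commute)
  also have "\<dots> = (\<Sum>k\<le>Suc n. sc (t^k) (A (cf A B y n k))) + (\<Sum>k\<le>Suc n. sc (t^k) (case k of 0 \<Rightarrow> 0 | Suc j \<Rightarrow> B (cf A B y n j)))"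
  proof -
    have 1: "(\<Sum>k\<le>Suc n. sc (t^k) (A (cf A B y n k))) = (\<Sum>k\<le>n. sc (t^k) (A (cf A B y n k)))"
      by (simp add: cf_gt[of A B, OF A0 B0] A0)
    have 2: "(\<Sum>k\<le>Suc n. sc (t^k) (case k of 0 \<Rightarrow> 0 | Suc j \<Rightarrow> B (cf A B y n j))) = (\<Sum>k\<le>n. sc (t^Suc k) (B (cf A B y n k)))"
      by (subst sum.atMost_Suc_shift) simp
    show ?thesis using 1 2 by simp
  qed
  also have "\<dots> = (\<Sum>k\<le>Suc n. sc (t^k) (cf A B y (Suc n) k))"
    by (simp add: sum.distrib scale_right_distrib)
  finally show ?case .
qed

lemma ad_lin: "Vector_Spaces.linear sc sc (ad br x)"
  unfolding ad_def by (rule linL)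

lemma ad_plus: "ad br (x + sc t w) = (\<lambda>v. ad br x v + sc t (ad br w v))"
  unfolding ad_def by (simp add: addR scR)

lemma E_iff: "y \<in> engel_elements br \<longleftrightarrow> (\<forall>x. (ad br x ^^ dimension) y = 0)"
  unfolding engel_elements_def engel_set_def using pow_bound[OF ad_lin] by blast

lemma der_inv:
  assumes D: "derivation sc br D" and y: "y \<in> engel_elements br"
  shows "D y \<in> engel_elements br"
  unfolding E_iff
proof
  fix x
  define A where "A = ad br x"
  define B where "B = ad br (D x)"
  have lD: "Vector_Spaces.linear sc sc D" and dD: "\<And>a b. D (br a b) = br (D a) b + br a (D b)"
    using D unfolding derivation_def by auto
  have lA: "Vector_Spaces.linear sc sc A" and lB: "Vector_Spaces.linear sc sc B"
    unfolding A_def B_def by (rule ad_lin)+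
  have key: "(A^^n) (D y) = D ((A^^n) y) - cf A B y n 1" for n
  proof (induction n)
    case 0 then show ?case by simp
  next
    case (Suc n)
    have e: "D (A ((A^^n) y)) = A (D ((A^^n) y)) + B ((A^^n) y)"
      unfolding A_def B_def ad_def by (rule dD)
    have "(A^^Suc n) (D y) = A (D ((A^^n) y)) - A (cf A B y n 1)"
      using Suc by (simp add: lin_diff[OF lA])
    also have "\<dots> = D ((A^^Suc n) y) - cf A B y (Suc n) 1"
      using e by (simp add: cf_0 algebra_simps)
    finally show ?case .
  qed
  have A0: "A 0 = 0" and B0: "B 0 = 0" using lin_zero lA lB by auto
  have c1: "cf A B y dimension 1 = 0"
  proof (cases "1 \<le> dimension")
    case True
    show ?thesis
    proof (rule poly_vec[OF _ True])
      fix t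
      have "(\<Sum>k\<le>dimension. sc (t^k) (cf A B y dimension k)) = ((\<lambda>v. A v + sc t (B v))^^dimension) y"
        by (rule expand[OF lA lB, symmetric])
      also have "\<dots> = (ad br (x + sc t (D x)) ^^ dimension) y"
        unfolding A_def B_def ad_plus ..
      also have "\<dots> = 0" using y unfolding E_iff by blast
      finally show "(\<Sum>k\<le>dimension. sc (t^k) (cf A B y dimension k)) = 0" .
    qed
  next
    case False then show ?thesis using cf_gt[of A B, OF A0 B0] by simp
  qed
  have "(A^^dimension) y = 0" using y unfolding E_iff A_def by blast
  then show "(ad br x ^^ dimension) (D y) = 0"
    using key[of dimension] c1 lin_zero[OF lD] unfolding A_def by simp
qed

lemma E_sub: "subspace (engel_elements br)"
proof -
  have l: "Vector_Spaces.linear sc sc (ad br x ^^ dimension)" for x by (rule funpow_lin[OF ad_lin])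
  show ?thesis unfolding subspace_def
  proof (intro conjI ballI allI)
    show "0 \<in> engel_elements br" unfolding E_iff using l by (simp add: lin_zero)
  next
    fix x y assume "x \<in> engel_elements br" "y \<in> engel_elements br"
    then show "x + y \<in> engel_elements br" unfolding E_iff using l by (simp add: lin_add)
  next
    fix c x assume "x \<in> engel_elements br"
    then show "sc c x \<in> engel_elements br" unfolding E_iff using l by (simp add: lin_sc)
  qed
qed

lemma E_char: "characteristic_ideal sc br (engel_elements br)"
  unfolding characteristic_ideal_def lie_ideal_def
  using E_sub der_inv derivation_ad by blast

definition subalg :: "'L set \<Rightarrow> bool" where
  "subalg H \<longleftrightarrow> subspace H \<and> (\<forall>a\<in>H. \<forall>b\<in>H. br a b \<in> H)"

definition invar :: "'L set \<Rightarrow> 'L set \<Rightarrow> bool" where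
  "invar H U \<longleftrightarrow> (\<forall>u\<in>U. \<forall>h\<in>H. br u h \<in> U)"

lemma fin_basis:
  assumes "subspace V"
  obtains B where "finite B" "B \<subseteq> V" "V \<subseteq> span B"
  using basis_exists[of V] finiteI_independent by metis

lemma uniform_mod:
  assumes lf: "Vector_Spaces.linear sc sc f" and sU: "subspace U" and sV: "subspace V"
    and iU: "\<And>u. u \<in> U \<Longrightarrow> f u \<in> U" and nil: "\<And>v. v \<in> V \<Longrightarrow> \<exists>m. (f^^m) v \<in> U"
  shows "\<exists>n. \<forall>v\<in>V. (f^^n) v \<in> U"
proof -
  have stayU: "u \<in> U \<Longrightarrow> (f^^j) u \<in> U" for u j
    by (induction j) (auto intro: iU)
  have stay: "(f^^m) v \<in> U \<Longrightarrow> m \<le> n \<Longrightarrow> (f^^n) v \<in> U" for m n v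
  proof -
    assume a: "(f^^m) v \<in> U" "m \<le> n"
    have "(f^^n) v = (f^^(n-m)) ((f^^m) v)" using a(2) by (simp add: funpow_add[symmetric, THEN fun_cong, simplified])
    then show ?thesis using stayU a(1) by simp
  qed
  obtain B where B: "finite B" "B \<subseteq> V" "V \<subseteq> span B" using fin_basis[OF sV] by blast
  have "\<forall>b\<in>B. \<exists>m. (f^^m) b \<in> U" using nil B(2) by blast
  then obtain mf where mf: "\<forall>b\<in>B. (f^^mf b) b \<in> U" by metis
  define n where "n = sum mf B"
  have "\<forall>b\<in>B. (f^^n) b \<in> U"
    using mf stay member_le_sum[of _ B mf] B(1) unfolding n_def by blast
  moreover have "subspace {v. (f^^n) v \<in> U}"
    using sU funpow_lin[OF lf, of n] unfolding subspace_def by (simp add: lin_add lin_sc lin_zero)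
  ultimately have "span B \<subseteq> {v. (f^^n) v \<in> U}" by (intro span_minimal) auto
  then show ?thesis using B(3) by blast
qed

lemma sub_diff: "subspace S \<Longrightarrow> x \<in> S \<Longrightarrow> y \<in> S \<Longrightarrow> x - y \<in> S"
  by (rule subspace_diff)

lemma der_id2: "br v (br c h) = br (br v c) h - br (br v h) c"
  using der_id[of v c h] by (metis add_diff_cancel_left')

lemma subalg_sub: "subalg H \<Longrightarrow> subspace H" unfolding subalg_def by simp

lemma pow_in: "subalg H \<Longrightarrow> k \<in> H \<Longrightarrow> h \<in> H \<Longrightarrow> (ad br k ^^ m) h \<in> H"
  by (induction m) (auto simp: subalg_def ad_def)

lemma nil_step:
  assumes H: "subalg H" and sU: "subspace U" and sV: "subspace V" and UV: "U \<subseteq> V"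
    and iU: "invar H U" and iV: "invar H V"
    and nil: "\<forall>h\<in>H. \<forall>v\<in>V. \<exists>m. (ad br h ^^ m) v \<in> U"
    and k: "k \<in> H" and h: "h \<in> H"
  shows "\<exists>m. \<forall>v\<in>V. br v ((ad br k ^^ m) h) \<in> U"
proof -
  have kU: "u \<in> U \<Longrightarrow> ad br k u \<in> U" for u using iU k unfolding invar_def ad_def by blast
  obtain n where n: "\<forall>v\<in>V. (ad br k ^^ n) v \<in> U"
    using uniform_mod[OF ad_lin sU sV kU] nil k by blast
  define W where "W j = {v\<in>V. (ad br k ^^ j) v \<in> U}" for j
  have stayU: "u \<in> U \<Longrightarrow> (ad br k ^^ j) u \<in> U" for u j
    by (induction j) (auto intro: kU)
  have subW: "subspace (W j)" for j
  proof -
    have l: "Vector_Spaces.linear sc sc (ad br k ^^ j)" by (rule funpow_lin[OF ad_lin])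
    show ?thesis unfolding W_def subspace_def
      using sU sV l unfolding subspace_def by (simp add: lin_add lin_sc lin_zero)
  qed
  have UW: "U \<subseteq> W j" for j unfolding W_def using UV stayU by blast
  have W0: "W 0 = U" unfolding W_def using UV by auto
  have Wmono: "i \<le> j \<Longrightarrow> W i \<subseteq> W j" for i j
  proof
    fix v assume a: "i \<le> j" "v \<in> W i"
    have "(ad br k ^^ j) v = (ad br k ^^ (j - i)) ((ad br k ^^ i) v)"
      using a(1) by (simp add: funpow_add[symmetric, THEN fun_cong, simplified])
    then show "v \<in> W j" using a stayU unfolding W_def by auto
  qed
  have Wn: "V \<subseteq> W n" unfolding W_def using n by auto
  have kV: "v \<in> V \<Longrightarrow> br v k \<in> V" for v using iV k unfolding invar_def by blast
  have shift: "v \<in> W (Suc i) \<Longrightarrow> br v k \<in> W i" for v i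
    unfolding W_def using kV by (auto simp: funpow_Suc_right ad_def simp del: funpow.simps)
  have shift0: "v \<in> W 0 \<Longrightarrow> br v k \<in> W 0" for v
    using W0 kU unfolding ad_def by auto
  have shift': "v \<in> W i \<Longrightarrow> br v k \<in> W (i - 1)" for v i
    using shift shift0 by (cases i) auto
  have hV: "v \<in> V \<Longrightarrow> g \<in> H \<Longrightarrow> br v g \<in> V" for v g using iV unfolding invar_def by blast
  have hU: "v \<in> U \<Longrightarrow> g \<in> H \<Longrightarrow> br v g \<in> U" for v g using iU unfolding invar_def by blast
  have claim: "v \<in> W j \<Longrightarrow> br v ((ad br k ^^ m) h) \<in> W (n + j - m)" for m j v
  proof (induction m arbitrary: j v)
    case 0
    have "br v h \<in> W n" using Wn hV h 0 unfolding W_def by auto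
    then show ?case using Wmono[of n "n + j"] by auto
  next
    case (Suc m)
    define g where "g = (ad br k ^^ m) h"
    have gH: "g \<in> H" unfolding g_def by (rule pow_in[OF H k h])
    have e: "(ad br k ^^ Suc m) h = br g k" unfolding g_def by (simp add: ad_def)
    have t1: "br (br v g) k \<in> W (n + j - Suc m)"
      using shift'[OF Suc.IH[OF Suc.prems, folded g_def]] by simp
    have t2: "br (br v k) g \<in> W (n + j - Suc m)"
    proof (cases j)
      case 0
      then have "v \<in> U" using Suc.prems W0 by simp
      then have "br (br v k) g \<in> U" using hU k gH by blast
      then show ?thesis using UW by blast
    next
      case (Suc j')
      then have "br v k \<in> W j'" using shift Suc.prems by simp
      from Suc.IH[OF this, folded g_def] show ?thesis using Suc by simp
    qed
    show ?case unfolding e der_id2 using subspace_diff[OF subW t1 t2] .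
  qed
  show ?thesis
  proof (intro exI ballI)
    fix v assume "v \<in> V"
    then have "v \<in> W n" using Wn by blast
    from claim[OF this, of "n + n"] show "br v ((ad br k ^^ (n + n)) h) \<in> U" using W0 by simp
  qed
qed

lemma engel:
  assumes "subalg H" "subspace U" "subspace V" "U \<subset> V" "invar H U" "invar H V"
    "\<forall>h\<in>H. \<forall>v\<in>V. \<exists>m. (ad br h ^^ m) v \<in> U"
  shows "\<exists>v\<in>V - U. \<forall>h\<in>H. br v h \<in> U"
  using assms
proof (induction "dim H" arbitrary: H U V rule: less_induct)
  case less
  note H = less.prems(1) and sU = less.prems(2) and sV = less.prems(3) and UV = less.prems(4)
    and iU = less.prems(5) and iV = less.prems(6) and nil = less.prems(7)
  have sH: "subspace H" using H by (rule subalg_sub)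
  show ?case
  proof (cases "\<forall>h\<in>H. \<forall>v\<in>V. br v h \<in> U")
    case True
    then show ?thesis using UV by blast
  next
    case False
    define C where "C = {h\<in>H. \<forall>v\<in>V. br v h \<in> U}"
    have CH: "C \<subseteq> H" unfolding C_def by blast
    have CneH: "C \<noteq> H" using False unfolding C_def by blast
    have subC: "subspace C"
      using sH sU unfolding C_def subspace_def by (simp add: addR scR)
    have Cid: "br c h \<in> C" if "c \<in> C" "h \<in> H" for c h
    proof -
      have "br c h \<in> H" using H that CH unfolding subalg_def by blast
      moreover have "br v (br c h) \<in> U" if v: "v \<in> V" for v
      proof -
        have "br (br v c) h \<in> U" using iU \<open>c \<in> C\<close> \<open>h \<in> H\<close> v unfolding C_def invar_def by blast
        moreover have "br (br v h) c \<in> U"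
          using iV v \<open>h \<in> H\<close> \<open>c \<in> C\<close> unfolding C_def invar_def by blast
        ultimately show ?thesis unfolding der_id2 by (rule subspace_diff[OF sU])
      qed
      ultimately show ?thesis unfolding C_def by blast
    qed
    have subalgC: "subalg C" unfolding subalg_def using subC Cid CH by blast
    define S where "S = {K. subalg K \<and> C \<subseteq> K \<and> K \<subset> H}"
    have CS: "C \<in> S" unfolding S_def using subalgC CH CneH by blast
    have finS: "finite (dim ` S)"
      by (rule finite_subset[of _ "{..dimension}"]) (auto intro: dim_subset_UNIV)
    define mx where "mx = Max (dim ` S)"
    have "mx \<in> dim ` S" unfolding mx_def using finS CS by (intro Max_in) auto
    then obtain K where KS: "K \<in> S" and Kmx: "dim K = mx" by blast
    have maxK: "K' \<in> S \<Longrightarrow> dim K' \<le> dim K" for K' unfolding Kmx mx_def using finS by simp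
    have K: "subalg K" "C \<subseteq> K" "K \<subset> H" using KS unfolding S_def by auto
    have sK: "subspace K" using K(1) by (rule subalg_sub)
    have dimK: "dim K < dim H"
      using dim_psubset[of K H] K(3) sK sH by (simp add: span_sub)
    have KH: "k \<in> K \<Longrightarrow> k \<in> H" for k using K(3) by blast
    have nilK: "\<forall>k\<in>K. \<forall>h\<in>H. \<exists>m. (ad br k ^^ m) h \<in> K"
    proof (intro ballI)
      fix k h assume k: "k \<in> K" and h: "h \<in> H"
      obtain m where m: "\<forall>v\<in>V. br v ((ad br k ^^ m) h) \<in> U"
        using nil_step[OF H sU sV _ iU iV nil KH[OF k] h] UV by blast
      have "(ad br k ^^ m) h \<in> C" unfolding C_def using m pow_in[OF H KH[OF k] h] by blast
      then show "\<exists>m. (ad br k ^^ m) h \<in> K" using K(2) by blast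
    qed
    have iKK: "invar K K" using K(1) unfolding subalg_def invar_def by blast
    have iKH: "invar K H" using H KH unfolding subalg_def invar_def by blast
    obtain h0 where h0: "h0 \<in> H - K" and h0K: "\<forall>k\<in>K. br h0 k \<in> K"
      using less.hyps[OF dimK K(1) sK sH K(3) iKK iKH nilK] by blast
    define K' where "K' = {k + sc t h0 | k t. k \<in> K}"
    have subK': "subspace K'"
      unfolding subspace_def
    proof (intro conjI ballI allI)
      show "0 \<in> K'" unfolding K'_def using subspace_0[OF sK] by (intro CollectI exI[of _ 0] exI[of _ "0::'k"]) simp
    next
      fix x y assume "x \<in> K'" "y \<in> K'"
      then obtain k1 t1 k2 t2 where "x = k1 + sc t1 h0" "k1 \<in> K" "y = k2 + sc t2 h0" "k2 \<in> K"
        unfolding K'_def by blast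
      then show "x + y \<in> K'" unfolding K'_def using subspace_add[OF sK]
        by (intro CollectI exI[of _ "k1 + k2"] exI[of _ "t1 + t2"]) (simp add: algebra_simps)
    next
      fix c x assume "x \<in> K'"
      then obtain k1 t1 where "x = k1 + sc t1 h0" "k1 \<in> K" unfolding K'_def by blast
      then show "sc c x \<in> K'" unfolding K'_def using subspace_scale[OF sK]
        by (intro CollectI exI[of _ "sc c k1"] exI[of _ "c * t1"]) (simp add: algebra_simps)
    qed
    have subalgK': "subalg K'" unfolding subalg_def
    proof (intro conjI ballI subK')
      fix x y assume "x \<in> K'" "y \<in> K'"
      then obtain k1 t1 k2 t2 where xy: "x = k1 + sc t1 h0" "k1 \<in> K" "y = k2 + sc t2 h0" "k2 \<in> K"
        unfolding K'_def by blast
      have "br x y = br k1 k2 + sc t2 (br k1 h0) + sc t1 (br h0 k2)"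
        unfolding xy by (simp add: addL addR scL scR)
      also have "\<dots> = br k1 k2 - sc t2 (br h0 k1) + sc t1 (br h0 k2)"
        using anti[of h0 k1] by (simp add: scale_minus_right)
      finally have "br x y = (br k1 k2 - sc t2 (br h0 k1) + sc t1 (br h0 k2)) + sc 0 h0" by simp
      moreover have "br k1 k2 - sc t2 (br h0 k1) + sc t1 (br h0 k2) \<in> K"
        using iKK xy h0K sK unfolding invar_def
        by (intro subspace_add[OF sK] subspace_diff[OF sK] subspace_scale[OF sK]) auto
      ultimately show "br x y \<in> K'" unfolding K'_def by blast
    qed
    have KK': "K \<subseteq> K'" unfolding K'_def by (force intro: exI[of _ "0::'k"])
    have h0K': "h0 \<in> K'" unfolding K'_def using subspace_0[OF sK]
      by (intro CollectI exI[of _ 0] exI[of _ "1::'k"]) simp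
    have K'H: "K' \<subseteq> H" unfolding K'_def using sH h0 KH
      by (auto intro!: subspace_add[OF sH] subspace_scale[OF sH])
    have "dim K < dim K'"
      using dim_psubset[of K K'] KK' h0K' h0 sK subK' by (auto simp: span_sub)
    then have K'eq: "K' = H" using maxK[of K'] subalgK' K(2) KK' K'H unfolding S_def by fastforce
    have iKU: "invar K U" and iKV: "invar K V" using iU iV KH unfolding invar_def by blast+
    have nilKV: "\<forall>h\<in>K. \<forall>v\<in>V. \<exists>m. (ad br h ^^ m) v \<in> U" using nil KH by blast
    obtain w where w: "w \<in> V - U" "\<forall>k\<in>K. br w k \<in> U"
      using less.hyps[OF dimK K(1) sU sV UV iKU iKV nilKV] by blast
    define Wk where "Wk = {v\<in>V. \<forall>k\<in>K. br v k \<in> U}"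
    have h0H: "h0 \<in> H" using h0 by blast
    have Wkinv: "v \<in> Wk \<Longrightarrow> br v h0 \<in> Wk" for v
    proof -
      assume v: "v \<in> Wk"
      have "br v h0 \<in> V" using v iV h0H unfolding Wk_def invar_def by blast
      moreover have "br (br v h0) k \<in> U" if k: "k \<in> K" for k
      proof -
        have "br (br v k) h0 \<in> U" using v k iU h0H unfolding Wk_def invar_def by blast
        moreover have "br v (br h0 k) \<in> U" using v k h0K unfolding Wk_def by blast
        ultimately show ?thesis unfolding der_id[of v h0 k] by (rule subspace_add[OF sU])
      qed
      ultimately show ?thesis unfolding Wk_def by blast
    qed
    have iter: "(ad br h0 ^^ j) w \<in> Wk" for j
      by (induction j) (use w Wkinv in \<open>auto simp: Wk_def ad_def\<close>)
    obtain m where m: "(ad br h0 ^^ m) w \<in> U" using nil h0H w by blast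
    define m0 where "m0 = (LEAST m. (ad br h0 ^^ m) w \<in> U)"
    have m0U: "(ad br h0 ^^ m0) w \<in> U" unfolding m0_def using m by (rule LeastI)
    have m0pos: "m0 \<noteq> 0"
    proof
      assume "m0 = 0" then show False using m0U w by simp
    qed
    define w' where "w' = (ad br h0 ^^ (m0 - 1)) w"
    have w'U: "w' \<notin> U" unfolding w'_def m0_def
      using not_less_Least[of "m0 - 1" "\<lambda>m. (ad br h0 ^^ m) w \<in> U"] m0pos m0_def by auto
    have w'W: "w' \<in> Wk" unfolding w'_def by (rule iter)
    have w'h0: "br w' h0 \<in> U"
    proof -
      have "br w' h0 = (ad br h0 ^^ Suc (m0 - 1)) w" unfolding w'_def by (simp add: ad_def)
      then show ?thesis using m0U m0pos by simp
    qed
    show ?thesis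
    proof (intro bexI ballI)
      fix h assume "h \<in> H"
      then obtain k t where "h = k + sc t h0" "k \<in> K" using K'eq unfolding K'_def by blast
      then have "br w' h = br w' k + sc t (br w' h0)" by (simp add: addR scR)
      moreover have "br w' k \<in> U" using w'W \<open>k \<in> K\<close> unfolding Wk_def by blast
      ultimately show "br w' h \<in> U" using w'h0 by (simp add: subspace_add[OF sU] subspace_scale[OF sU])
    next
      show "w' \<in> V - U" using w'W w'U unfolding Wk_def by blast
    qed
  qed
qed

primrec zser :: "nat \<Rightarrow> 'L set" where
  "zser 0 = {0}"
| "zser (Suc i) = {v \<in> engel_elements br. \<forall>h. br v h \<in> zser i}"

lemma zser_props: "subspace (zser i) \<and> zser i \<subseteq> engel_elements br \<and> invar UNIV (zser i) \<and> zser i \<subseteq> zser (Suc i)"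
proof (induction i)
  case 0
  have "0 \<in> engel_elements br" using subspace_0[OF E_sub] .
  then show ?case unfolding invar_def by auto
next
  case (Suc i)
  then have s: "subspace (zser i)" and iv: "invar UNIV (zser i)" and mo: "zser i \<subseteq> zser (Suc i)" by auto
  have sub: "subspace (zser (Suc i))"
    using E_sub s unfolding subspace_def by (auto simp: addL scL)
  have inv: "invar UNIV (zser (Suc i))" unfolding invar_def
  proof (intro ballI)
    fix v h' assume v: "v \<in> zser (Suc i)"
    have "br v h' \<in> engel_elements br" using v E_char unfolding characteristic_ideal_def lie_ideal_def by auto
    moreover have "br (br v h') h \<in> zser i" for h
    proof -
      have "br (br v h) h' \<in> zser i" using v iv unfolding invar_def by auto
      moreover have "br v (br h' h) \<in> zser i" using v by auto
      ultimately show ?thesis unfolding der_id[of v h' h] by (rule subspace_add[OF s])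
    qed
    ultimately show "br v h' \<in> zser (Suc i)" by simp
  qed
  have "zser (Suc i) \<subseteq> zser (Suc (Suc i))" using mo by auto
  then show ?case using sub inv by auto
qed

lemma zser_strict: "zser i \<noteq> engel_elements br \<Longrightarrow> zser i \<subset> zser (Suc i)"
proof -
  assume ne: "zser i \<noteq> engel_elements br"
  have sU: "subalg UNIV" unfolding subalg_def by simp
  have invE: "invar UNIV (engel_elements br)"
    using E_char unfolding characteristic_ideal_def lie_ideal_def invar_def by auto
  have z0: "0 \<in> zser i" using zser_props[of i] subspace_0 by blast
  have nilz: "\<forall>h\<in>UNIV. \<forall>v\<in>engel_elements br. \<exists>m. (ad br h ^^ m) v \<in> zser i"
  proof (intro ballI)
    fix h v assume "v \<in> engel_elements br"
    then obtain m where "(ad br h ^^ m) v = 0" unfolding engel_elements_def engel_set_def by blast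
    then show "\<exists>m. (ad br h ^^ m) v \<in> zser i" using z0 by metis
  qed
  have zp: "subspace (zser i)" "zser i \<subseteq> engel_elements br" "invar UNIV (zser i)" "zser i \<subseteq> zser (Suc i)"
    using zser_props[of i] by auto
  have ps: "zser i \<subset> engel_elements br" using zp(2) ne by blast
  obtain v where v: "v \<in> engel_elements br - zser i" "\<forall>h\<in>UNIV. br v h \<in> zser i"
    using engel[OF sU zp(1) E_sub ps zp(3) invE nilz] by blast
  then have "v \<in> zser (Suc i)" by simp
  then show ?thesis using zp(4) v(1) by blast
qed

lemma zser_reach: "\<exists>i. zser i = engel_elements br"
proof (rule ccontr)
  assume "\<not> ?thesis"
  then have ch: "\<And>j. j < Suc dimension \<Longrightarrow> zser j \<subset> zser (Suc j)" using zser_strict by blast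
  have sz: "\<And>j. subspace (zser j)" using zser_props by blast
  have "dim (zser (Suc dimension)) \<ge> Suc dimension" by (rule chain_dim[of zser, OF sz ch])
  moreover have "dim (zser (Suc dimension)) \<le> dimension" by (rule dim_subset_UNIV)
  ultimately show False by simp
qed

lemma E_nil: "nilpotent_set sc br (engel_elements br)"
proof -
  obtain i where i: "zser i = engel_elements br" using zser_reach by blast
  have lc: "lower_central sc br (engel_elements br) j \<subseteq> zser (i - j)" for j
  proof (induction j)
    case 0 then show ?case using i by simp
  next
    case (Suc j)
    have "{br a b | a b. a \<in> lower_central sc br (engel_elements br) j \<and> b \<in> engel_elements br} \<subseteq> zser (i - Suc j)"
    proof clarify
      fix a b assume a: "a \<in> lower_central sc br (engel_elements br) j"
      show "br a b \<in> zser (i - Suc j)"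
      proof (cases "i - j")
        case 0
        then have "a = 0" using a Suc.IH by auto
        then show ?thesis using zser_props subspace_0 by auto
      next
        case (Suc i')
        then have "i - Suc j = i'" by simp
        then show ?thesis using a Suc.IH \<open>i - j = Suc i'\<close> by auto
      qed
    qed
    then show ?case using zser_props by (simp add: span_minimal)
  qed
  have z: "0 \<in> lower_central sc br (engel_elements br) j" for j
    by (cases j) (auto simp: span_zero subspace_0[OF E_sub])
  have "lower_central sc br (engel_elements br) i = {0}"
    using lc[of i] z[of i] by auto
  then show ?thesis unfolding nilpotent_set_def by blast
qed

lemma E_nilrad: "engel_elements br \<subseteq> nilradical sc br"
proof -
  have "lie_ideal sc br (engel_elements br)" using E_char unfolding characteristic_ideal_def by blast
  then have "engel_elements br \<subseteq> \<Union>{I. lie_ideal sc br I \<and> nilpotent_set sc br I}" using E_nil by blast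
  then show ?thesis unfolding nilradical_def using span_superset by blast
qed

end

theorem theorem2p2:
  fixes sc :: "'k::field_char_0 \<Rightarrow> 'L::ab_group_add \<Rightarrow> 'L"
    and br :: "'L \<Rightarrow> 'L \<Rightarrow> 'L"
  assumes "lie_algebra sc br"
    and "finite_dimensional sc"
  shows "characteristic_ideal sc br (engel_elements br)
         \<and> engel_elements br \<subseteq> nilradical sc br"
proof -
  have vs: "vector_space sc" using assms(1) unfolding lie_algebra_def by blast
  obtain B where B: "finite B" "module.span sc B = UNIV" using assms(2) unfolding finite_dimensional_def by blast
  obtain B' where B': "\<not> module.dependent sc B'" "UNIV \<subseteq> module.span sc B'"
  proof -
    obtain X where X: "X \<subseteq> UNIV" "\<not> module.dependent sc X" "UNIV \<subseteq> module.span sc X"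
      "card X = vector_space.dim sc UNIV"
      by (rule vector_space.basis_exists[OF vs])
    show ?thesis using that X(2,3) by blast
  qed
  have fB': "finite B'" using vector_space.independent_span_bound[OF vs B(1) B'(1)] B(2) by blast
  interpret L: lie_fd sc B' br
  proof unfold_locales
    show "finite B'" by fact
    show "\<not> module.dependent sc B'" by fact
    show "module.span sc B' = UNIV" using B'(2) by blast
    show "lie_algebra sc br" by fact
  qed (use vs in \<open>auto simp: vector_space_def\<close>)
  show ?thesis using L.E_char L.E_nilrad by blast
qed

end
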